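(* Let $\boldsymbol\mu=\{\mu_t\}_{t>0}$ be a factorizing family over $[0,1]\times L$. Then for every $0\le s<t\le1$, the measures $(R_{s,t})_*\mu_1$ and $\mu_{t-s}$ on $\mathscr C_{t-s}$ are mutually absolutely continuous, where $R_{s,t}:\mathscr C_1\to\mathscr C_{t-s}$ is $R_{s,t}(Z)=(Z\cap([s,t]\times L))-(s,0)$.
   Context: Let $L$ be a locally compact, second countable Hausdorff space. For $t>0$ let $\mathscr C_t$ be the space of closed subsets of $[0,t]\times L$ with the Borel $\sigma$-field of the Fell topology. For $s,t>0$, $\oplus_{s,t}(Z_1,Z_2)=Z_1\cup\{(s+r,\ell):(r,\ell)\in Z_2\}$, and $A-(s,0)=\{(r-s,\ell):(r,\ell)\in A\}$. A family $\{\mu_t\}_{t>0}$ of probability measures on $\mathscr C_t$ is a factorizing family over $[0,1]\times L$ if (i) $\mu_{s+t}$ and $(\mu_s\otimes\mu_t)\circ\oplus_{s,t}^{-1}$ are mutually absolutely continuous for all $s,t>0$, and (ii) $\mu_t(\{Z:Z\cap(\{r\}\times L)\neq\varnothing\})=0$ for all $t>0$, $r\in[0,t]$. *)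

theory Defs
  imports "HOL-Analysis.Analysis" "HOL-Probability.Probability"
begin

definition strip :: "real \<Rightarrow> (real \<times> 'l::topological_space) set" where
  "strip t = {0..t} \<times> UNIV"

definition closed_subsets :: "real \<Rightarrow> (real \<times> 'l::topological_space) set set" where
  "closed_subsets t = {F. closedin (top_of_set (strip t)) F}"

definition Fell_topology :: "real \<Rightarrow> (real \<times> 'l::topological_space) set topology" where
  "Fell_topology t = topology_generated_by
     ({{F \<in> closed_subsets t. F \<inter> K = {}} | K. compactin (top_of_set (strip t)) K}
      \<union> {{F \<in> closed_subsets t. F \<inter> G \<noteq> {}} | G. openin (top_of_set (strip t)) G})"

definition borel_of_top :: "'a topology \<Rightarrow> 'a measure" where
  "borel_of_top X = sigma (topspace X) {U. openin X U}"

definition Cspace :: "real \<Rightarrow> (real \<times> 'l::topological_space) set measure" where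
  "Cspace t = borel_of_top (Fell_topology t)"

definition oplus :: "real \<Rightarrow> (real \<times> 'l) set \<Rightarrow> (real \<times> 'l) set \<Rightarrow> (real \<times> 'l) set" where
  "oplus s Z1 Z2 = Z1 \<union> {(s + r, l) | r l. (r, l) \<in> Z2}"

definition shift_back :: "(real \<times> 'l) set \<Rightarrow> real \<Rightarrow> (real \<times> 'l) set" where
  "shift_back A s = {(r - s, l) | r l. (r, l) \<in> A}"

definition mutually_ac :: "'a measure \<Rightarrow> 'a measure \<Rightarrow> bool" where
  "mutually_ac M N \<longleftrightarrow> absolutely_continuous M N \<and> absolutely_continuous N M"

definition factorizing_family :: "(real \<Rightarrow> (real \<times> 'l::topological_space) set measure) \<Rightarrow> bool" where
  "factorizing_family \<mu> \<longleftrightarrow>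
     (\<forall>t>0. prob_space (\<mu> t) \<and> sets (\<mu> t) = sets (Cspace t)) \<and>
     (\<forall>s>0. \<forall>t>0. mutually_ac (\<mu> (s + t))
        (distr (\<mu> s \<Otimes>\<^sub>M \<mu> t) (Cspace (s + t)) (\<lambda>(Z1, Z2). oplus s Z1 Z2))) \<and>
     (\<forall>t>0. \<forall>r\<in>{0..t}. emeasure (\<mu> t) {Z \<in> space (\<mu> t). Z \<inter> ({r} \<times> UNIV) \<noteq> {}} = 0)"

definition restr :: "real \<Rightarrow> real \<Rightarrow> (real \<times> 'l) set \<Rightarrow> (real \<times> 'l) set" where
  "restr s t Z = shift_back (Z \<inter> ({s..t} \<times> UNIV)) s"

end

theory Submission
  imports Defs
begin
lemma LC_nb:
  assumes "locally_compact_space (euclidean :: 'l::t2_space topology)"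
    and "open (U::(real \<times> 'l) set)" and "x \<in> U"
  shows "\<exists>V. open V \<and> x \<in> V \<and> compact (closure V) \<and> closure V \<subseteq> U"
proof -
  have lc: "locally_compact_space (euclidean :: (real \<times> 'l) topology)"
    using locally_compact_space_prod_topology[of "euclidean::real topology" "euclidean::'l topology"]
      assms(1) locally_compact_space_euclidean by simp
  have hs: "Hausdorff_space (euclidean :: (real \<times> 'l) topology)"
    unfolding Hausdorff_space_def by (metis disjnt_def hausdorff open_openin)
  have "neighbourhood_base_of (\<lambda>C. compactin euclidean C \<and> closedin euclidean C) (euclidean :: (real \<times> 'l) topology)"
    using lc hs locally_compact_Hausdorff_imp_regular_space locally_compact_regular_space_neighbourhood_base by blast
  then obtain V C where VC: "open V" "compact C" "closed C" "x \<in> V" "V \<subseteq> C" "C \<subseteq> U"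
    using assms(2,3) unfolding neighbourhood_base_of by (metis closed_closedin compactin_euclidean_iff open_openin)
  have "closure V \<subseteq> C" using VC by (simp add: closure_minimal)
  moreover have "compact (closure V)"
    using compact_Int_closed[OF VC(2), of "closure V"] \<open>closure V \<subseteq> C\<close> by (simp add: Int_absorb1)
  ultimately show ?thesis using VC by blast
qed

definition BB :: "'a::second_countable_topology set set" where
  "BB = (SOME B. countable B \<and> topological_basis B)"

lemma BB: "countable (BB::'a::second_countable_topology set set)" "topological_basis (BB::'a set set)"
  using someI_ex[OF ex_countable_basis] unfolding BB_def by auto

definition BBc :: "'a::second_countable_topology set set" where
  "BBc = {b \<in> BB. compact (closure b)}"

lemma BBc_countable: "countable BBc"
  unfolding BBc_def by (rule countable_subset[OF _ BB(1)]) auto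

lemma BBc_open: "b \<in> BBc \<Longrightarrow> open b"
  unfolding BBc_def using BB(2) topological_basis_open by blast

lemma LC_BBc:
  assumes "locally_compact_space (euclidean :: 'l::{t2_space,second_countable_topology} topology)"
    and "open (U::(real \<times> 'l) set)" and "x \<in> U"
  shows "\<exists>b\<in>BBc. x \<in> b \<and> closure b \<subseteq> U"
proof -
  obtain V where V: "open V" "x \<in> V" "compact (closure V)" "closure V \<subseteq> U"
    using LC_nb[OF assms] by blast
  obtain b where b: "b \<in> BB" "x \<in> b" "b \<subseteq> V"
    using BB(2) V(1,2) by (meson topological_basisE)
  have cb: "closure b \<subseteq> closure V" using b(3) closure_mono by blast
  have "compact (closure b)"
    using compact_Int_closed[OF V(3), of "closure b"] cb by (simp add: Int_absorb1)
  then show ?thesis using b cb V(4) unfolding BBc_def by blast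
qed

lemma sigma_compact:
  assumes "locally_compact_space (euclidean :: 'l::{t2_space,second_countable_topology} topology)"
    and "open (U::(real \<times> 'l) set)" and "closed E"
  shows "\<exists>\<K>. countable \<K> \<and> (\<forall>K\<in>\<K>. compact K) \<and> E \<inter> U = \<Union>\<K>"
proof -
  let ?K = "(\<lambda>b. closure b \<inter> E) ` {b \<in> BBc. closure b \<subseteq> U}"
  have "countable ?K" by (intro countable_image countable_subset[OF _ BBc_countable]) auto
  moreover have "\<forall>K\<in>?K. compact K" unfolding BBc_def using assms(3) compact_Int_closed by blast
  moreover have "E \<inter> U = \<Union>?K"
  proof
    show "E \<inter> U \<subseteq> \<Union>?K"
    proof
      fix x assume "x \<in> E \<inter> U"
      then obtain b where "b \<in> BBc" "x \<in> b" "closure b \<subseteq> U" using LC_BBc[OF assms(1,2)] by blast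
      then show "x \<in> \<Union>?K" using \<open>x \<in> E \<inter> U\<close> closure_subset by blast
    qed
  qed auto
  ultimately show ?thesis by blast
qed

lemma strip_closed: "closed (strip t)"
  unfolding strip_def by (intro closed_Times) auto

lemma closed_subsets_eq: "closed_subsets t = {F. closed F \<and> F \<subseteq> strip t}"
  unfolding closed_subsets_def using closedin_closed_eq[OF strip_closed] by auto

lemma compactin_strip: "compactin (top_of_set (strip t)) K \<longleftrightarrow> compact K \<and> K \<subseteq> strip t"
  by (simp add: compactin_subtopology)

definition miss :: "real \<Rightarrow> (real \<times> 'l::topological_space) set \<Rightarrow> (real \<times> 'l) set set" where
  "miss t K = {F \<in> closed_subsets t. F \<inter> K = {}}"
definition hit :: "real \<Rightarrow> (real \<times> 'l::topological_space) set \<Rightarrow> (real \<times> 'l) set set" where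
  "hit t G = {F \<in> closed_subsets t. F \<inter> G \<noteq> {}}"

definition SS :: "real \<Rightarrow> (real \<times> 'l::topological_space) set set set" where
  "SS t = {miss t K | K. compact K \<and> K \<subseteq> strip t} \<union> {hit t (strip t \<inter> U) | U. open U}"

lemma Fell_SS: "Fell_topology t = topology_generated_by (SS t)"
proof -
  have eq: "{{F \<in> closed_subsets t. F \<inter> K = {}} | K. compactin (top_of_set (strip t)) K}
      \<union> {{F \<in> closed_subsets t. F \<inter> G \<noteq> {}} | G. openin (top_of_set (strip t)) G} = SS t"
    unfolding SS_def miss_def hit_def compactin_strip openin_open by blast
  show ?thesis unfolding Fell_topology_def eq ..
qed

lemma topspace_Fell: "topspace (Fell_topology t) = closed_subsets t"
proof -
  have "miss t {} \<in> SS t" unfolding SS_def by auto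
  moreover have "miss t {} = closed_subsets t" unfolding miss_def by auto
  moreover have "\<Union>(SS t) \<subseteq> closed_subsets t" unfolding SS_def miss_def hit_def by auto
  ultimately show ?thesis unfolding Fell_SS topology_generated_by_topspace by blast
qed

lemma openin_Fell_sub: "openin (Fell_topology t) U \<Longrightarrow> U \<subseteq> closed_subsets t"
  using openin_subset topspace_Fell by metis

lemma space_Cspace: "space (Cspace t) = closed_subsets t"
  unfolding Cspace_def borel_of_top_def
  by (subst space_measure_of) (auto simp: topspace_Fell dest: openin_Fell_sub)

lemma sets_Cspace: "sets (Cspace t) = sigma_sets (closed_subsets t) {U. openin (Fell_topology t) U}"
  unfolding Cspace_def borel_of_top_def
  by (subst sets_measure_of) (auto simp: topspace_Fell dest: openin_Fell_sub)

lemma open_in_Cspace: "openin (Fell_topology t) U \<Longrightarrow> U \<in> sets (Cspace t)"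
  unfolding sets_Cspace by auto

lemma miss_sets: "compact K \<Longrightarrow> K \<subseteq> strip t \<Longrightarrow> miss t K \<in> sets (Cspace t)"
  by (rule open_in_Cspace) (auto simp: Fell_SS openin_topology_generated_by_iff SS_def
      intro!: generate_topology_on.Basis)

lemma hit_meas:
  fixes f :: "'a \<Rightarrow> (real \<times> 'l::{t2_space,second_countable_topology}) set"
  assumes lc: "locally_compact_space (euclidean :: 'l topology)"
    and f: "f \<in> space M \<rightarrow> closed_subsets t"
    and m: "\<And>K. compact K \<Longrightarrow> K \<subseteq> strip t \<Longrightarrow> {x \<in> space M. f x \<inter> K = {}} \<in> sets M"
    and E: "closed E" and U: "open U"
  shows "{x \<in> space M. f x \<inter> (E \<inter> U) \<noteq> {}} \<in> sets M"
proof -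
  obtain \<K> where K: "countable \<K>" "\<forall>K\<in>\<K>. compact K" "E \<inter> U = \<Union>\<K>"
    using sigma_compact[OF lc U E] by blast
  have "{x \<in> space M. f x \<inter> (E \<inter> U) \<noteq> {}} = (\<Union>K\<in>\<K>. space M - {x \<in> space M. f x \<inter> (K \<inter> strip t) = {}})"
    using f K(3) unfolding closed_subsets_eq by blast
  also have "\<dots> \<in> sets M"
    using K(1,2) m strip_closed compact_Int_closed by (intro sets.countable_UN'') blast+
  finally show ?thesis .
qed

lemma hit_sets:
  fixes E :: "(real \<times> 'l::{t2_space,second_countable_topology}) set"
  assumes lc: "locally_compact_space (euclidean :: 'l topology)"
    and E: "closed E"
  shows "{Z \<in> closed_subsets t. Z \<inter> E \<noteq> {}} \<in> sets (Cspace t)"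
proof -
  have "{x \<in> space (Cspace t). id x \<inter> (E \<inter> UNIV) \<noteq> {}} \<in> sets (Cspace t)"
    by (rule hit_meas[OF lc]) (auto simp: space_Cspace miss_def[symmetric] miss_sets E)
  then show ?thesis by (simp add: space_Cspace)
qed

definition K0 :: "real \<Rightarrow> (real \<times> 'l::{t2_space,second_countable_topology}) set set" where
  "K0 t = (\<lambda>\<F>. (\<Union>(closure ` \<F>)) \<inter> strip t) ` {\<F>. finite \<F> \<and> \<F> \<subseteq> BBc}"
definition G0 :: "real \<Rightarrow> (real \<times> 'l::{t2_space,second_countable_topology}) set set" where
  "G0 t = (\<lambda>b. strip t \<inter> b) ` BB"
definition S0 :: "real \<Rightarrow> (real \<times> 'l::{t2_space,second_countable_topology}) set set set" where
  "S0 t = miss t ` K0 t \<union> hit t ` G0 t"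
definition W0 :: "real \<Rightarrow> (real \<times> 'l::{t2_space,second_countable_topology}) set set set" where
  "W0 t = (\<lambda>A. closed_subsets t \<inter> \<Inter>A) ` {A. finite A \<and> A \<subseteq> S0 t}"

lemma W0_countable: "countable (W0 t)"
proof -
  have "countable (K0 t)" unfolding K0_def
    by (intro countable_image countable_Collect_finite_subset BBc_countable)
  moreover have "countable (G0 t)" unfolding G0_def by (intro countable_image BB)
  ultimately have "countable (S0 t)" unfolding S0_def by (metis countable_Un countable_image)
  then show ?thesis unfolding W0_def
    by (intro countable_image countable_Collect_finite_subset)
qed

lemma K0_compact: "K \<in> K0 t \<Longrightarrow> compact K \<and> K \<subseteq> strip t"
  unfolding K0_def BBc_def
  by (auto intro!: compact_Int_closed strip_closed compact_Union)

lemma W0_Int: "w1 \<in> W0 t \<Longrightarrow> w2 \<in> W0 t \<Longrightarrow> w1 \<inter> w2 \<in> W0 t"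
proof -
  assume "w1 \<in> W0 t" "w2 \<in> W0 t"
  then obtain A1 A2 where "finite A1" "A1 \<subseteq> S0 t" "w1 = closed_subsets t \<inter> \<Inter>A1"
    "finite A2" "A2 \<subseteq> S0 t" "w2 = closed_subsets t \<inter> \<Inter>A2" unfolding W0_def by blast
  then have "w1 \<inter> w2 = closed_subsets t \<inter> \<Inter>(A1 \<union> A2)" "finite (A1 \<union> A2)" "A1 \<union> A2 \<subseteq> S0 t" by auto
  then show ?thesis unfolding W0_def by blast
qed

lemma W0_single: "s \<in> S0 t \<Longrightarrow> closed_subsets t \<inter> s \<in> W0 t"
  unfolding W0_def by (rule image_eqI[of _ _ "{s}"]) auto

lemma gen_local:
  assumes lc: "locally_compact_space (euclidean :: 'l::{t2_space,second_countable_topology} topology)"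
    and g: "generate_topology_on (SS t) (U :: (real \<times> 'l) set set)"
  shows "\<forall>F\<in>U. \<exists>w\<in>W0 t. F \<in> w \<and> w \<subseteq> U"
  using g
proof induction
  case Empty
  then show ?case by simp
next
  case (Int a b)
  show ?case
  proof
    fix F assume F: "F \<in> a \<inter> b"
    obtain w1 where w1: "w1 \<in> W0 t" "F \<in> w1" "w1 \<subseteq> a" using Int.IH(1) F by (meson IntD1)
    obtain w2 where w2: "w2 \<in> W0 t" "F \<in> w2" "w2 \<subseteq> b" using Int.IH(2) F by (meson IntD2)
    show "\<exists>w\<in>W0 t. F \<in> w \<and> w \<subseteq> a \<inter> b"
      using w1 w2 by (intro bexI[of _ "w1 \<inter> w2"] W0_Int) auto
  qed
next
  case (UN K)
  show ?case
  proof
    fix F assume "F \<in> \<Union>K"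
    then obtain k where k: "k \<in> K" "F \<in> k" by blast
    then obtain w where "w \<in> W0 t" "F \<in> w" "w \<subseteq> k" using UN.IH by blast
    then show "\<exists>w\<in>W0 t. F \<in> w \<and> w \<subseteq> \<Union>K" using k by blast
  qed
next
  case (Basis s)
  show ?case
  proof
    fix F assume F: "F \<in> s"
    from Basis consider (m) K where "compact K" "K \<subseteq> strip t" "s = miss t K"
      | (h) V where "open V" "s = hit t (strip t \<inter> V)" unfolding SS_def by blast
    then show "\<exists>w\<in>W0 t. F \<in> w \<and> w \<subseteq> s"
    proof cases
      case m
      have Fs: "F \<in> closed_subsets t" "F \<inter> K = {}" using F unfolding m(3) miss_def by simp_all
      then have Fc: "closed F" "F \<subseteq> strip t" unfolding closed_subsets_eq by simp_all
      let ?U = "{b \<in> BBc. closure b \<subseteq> - F}"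
      have KU: "K \<subseteq> \<Union>?U"
      proof
        fix x assume "x \<in> K"
        then have "x \<in> - F" using Fs(2) by blast
        have "open (- F)" using Fc(1) by (rule open_Compl)
        from LC_BBc[OF lc this \<open>x \<in> - F\<close>] obtain b where "b \<in> BBc" "x \<in> b" "closure b \<subseteq> - F"
          by blast
        then show "x \<in> \<Union>?U" by blast
      qed
      have opU: "open B" if "B \<in> ?U" for B using that by (simp add: BBc_open)
      obtain \<F> where \<F>: "\<F> \<subseteq> ?U" "finite \<F>" "K \<subseteq> \<Union>\<F>"
        by (rule compactE[OF m(1) KU opU])
      define K' where "K' = (\<Union>(closure ` \<F>)) \<inter> strip t"
      have "\<F> \<subseteq> BBc" using \<F>(1) by blast
      then have "K' \<in> K0 t" unfolding K0_def K'_def using \<F>(2) by (intro image_eqI[of _ _ \<F>]) simp_all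
      then have "miss t K' \<in> S0 t" unfolding S0_def by simp
      then have w: "closed_subsets t \<inter> miss t K' \<in> W0 t" by (rule W0_single)
      have "\<And>b. b \<in> \<F> \<Longrightarrow> F \<inter> closure b = {}" using \<F>(1) by blast
      then have "F \<inter> K' = {}" unfolding K'_def by blast
      then have "F \<in> closed_subsets t \<inter> miss t K'" using Fs(1) unfolding miss_def by simp
      moreover have "K \<subseteq> K'"
      proof
        fix x assume "x \<in> K"
        then obtain b where "b \<in> \<F>" "x \<in> b" using \<F>(3) by blast
        then show "x \<in> K'" unfolding K'_def using m(2) \<open>x \<in> K\<close> closure_subset by blast
      qed
      then have "closed_subsets t \<inter> miss t K' \<subseteq> s" unfolding m(3) miss_def by blast
      ultimately show ?thesis using w by blast
    next
      case h
      then obtain x where x: "x \<in> F" "x \<in> strip t" "x \<in> V" using F unfolding hit_def by blast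
      then obtain b where b: "b \<in> BB" "x \<in> b" "b \<subseteq> V" using BB(2) h(1) by (meson topological_basisE)
      have "strip t \<inter> b \<in> G0 t" unfolding G0_def using b by blast
      then have w: "closed_subsets t \<inter> hit t (strip t \<inter> b) \<in> W0 t" by (intro W0_single) (auto simp: S0_def)
      have "F \<in> closed_subsets t \<inter> hit t (strip t \<inter> b)" using F x b h(2) unfolding hit_def by blast
      moreover have "closed_subsets t \<inter> hit t (strip t \<inter> b) \<subseteq> s" unfolding h(2) hit_def using b by blast
      ultimately show ?thesis using w by blast
    qed
  qed
qed

lemma fin_INT:
  assumes "finite A" "\<And>s. s \<in> A \<Longrightarrow> P s \<in> sets M"
  shows "space M \<inter> (\<Inter>s\<in>A. P s) \<in> sets M"
  using assms
proof (induction A rule: finite_induct)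
  case empty then show ?case by simp
next
  case (insert a A)
  have "space M \<inter> (\<Inter>s\<in>insert a A. P s) = P a \<inter> (space M \<inter> (\<Inter>s\<in>A. P s))" by auto
  then show ?case using insert by auto
qed

lemma measurable_Fell:
  fixes f :: "'a \<Rightarrow> (real \<times> 'l::{t2_space,second_countable_topology}) set"
  assumes lc: "locally_compact_space (euclidean :: 'l topology)"
    and f: "f \<in> space M \<rightarrow> closed_subsets t"
    and m: "\<And>K. compact K \<Longrightarrow> K \<subseteq> strip t \<Longrightarrow> {x \<in> space M. f x \<inter> K = {}} \<in> sets M"
  shows "f \<in> measurable M (Cspace t)"
proof -
  have S0m: "f -` s \<inter> space M \<in> sets M" if s: "s \<in> S0 t" for s
  proof -
    have "(\<exists>K. K \<in> K0 t \<and> s = miss t K) \<or> (\<exists>b. b \<in> BB \<and> s = hit t (strip t \<inter> b))"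
      using s unfolding S0_def G0_def by blast
    then show ?thesis
    proof (elim disjE exE conjE)
      fix K assume K: "K \<in> K0 t" "s = miss t K"
      have "f -` s \<inter> space M = {x \<in> space M. f x \<inter> K = {}}" using f unfolding K(2) miss_def by auto
      moreover have "compact K" "K \<subseteq> strip t" using K0_compact[OF K(1)] by simp_all
      ultimately show ?thesis using m by simp
    next
      fix b assume b: "b \<in> BB" "s = hit t (strip t \<inter> b)"
      have "open b" using b(1) BB(2) topological_basis_open by blast
      have "f -` s \<inter> space M = {x \<in> space M. f x \<inter> (strip t \<inter> b) \<noteq> {}}" using f unfolding b(2) hit_def by auto
      moreover have "{x \<in> space M. f x \<inter> (strip t \<inter> b) \<noteq> {}} \<in> sets M"
        by (rule hit_meas[OF lc f m strip_closed \<open>open b\<close>])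
      ultimately show ?thesis by simp
    qed
  qed
  have Wm: "f -` w \<inter> space M \<in> sets M" if "w \<in> W0 t" for w
  proof -
    from that obtain A where A0: "A \<in> {A. finite A \<and> A \<subseteq> S0 t}" "w = closed_subsets t \<inter> \<Inter>A"
      unfolding W0_def by (rule imageE)
    then have A: "finite A" "A \<subseteq> S0 t" "w = closed_subsets t \<inter> \<Inter>A" by simp_all
    have "f -` w \<inter> space M = space M \<inter> (\<Inter>s\<in>A. f -` s \<inter> space M)" using f A(3) by auto
    also have "\<dots> \<in> sets M" using A(1) by (rule fin_INT) (use A(2) S0m in blast)
    finally show ?thesis .
  qed
  show ?thesis
    unfolding Cspace_def borel_of_top_def
  proof (rule measurable_measure_of)
    show "{U. openin (Fell_topology t) U} \<subseteq> Pow (topspace (Fell_topology t))" using openin_subset by blast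
    show "f \<in> space M \<rightarrow> topspace (Fell_topology t)" using f by (simp add: topspace_Fell)
    fix U :: "(real \<times> 'l) set set" assume "U \<in> {U. openin (Fell_topology t) U}"
    then have "generate_topology_on (SS t) U" by (simp add: Fell_SS openin_topology_generated_by_iff)
    have loc: "\<forall>F\<in>U. \<exists>w\<in>W0 t. F \<in> w \<and> w \<subseteq> U" by (rule gen_local[OF lc]) fact
    have "U = \<Union>{w \<in> W0 t. w \<subseteq> U}"
    proof
      show "U \<subseteq> \<Union>{w \<in> W0 t. w \<subseteq> U}"
      proof
        fix F assume "F \<in> U"
        then obtain w where "w \<in> W0 t" "F \<in> w" "w \<subseteq> U" using loc by blast
        then show "F \<in> \<Union>{w \<in> W0 t. w \<subseteq> U}" by blast
      qed
    qed blast
    then have "f -` U \<inter> space M = (\<Union>w\<in>{w \<in> W0 t. w \<subseteq> U}. f -` w \<inter> space M)" by blast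
    also have "\<dots> \<in> sets M"
    proof (rule sets.countable_UN'')
      show "countable {w \<in> W0 t. w \<subseteq> U}" by (rule countable_subset[OF _ W0_countable]) blast
      show "f -` w \<inter> space M \<in> sets M" if "w \<in> {w \<in> W0 t. w \<subseteq> U}" for w
        using that Wm by simp
    qed
    finally show "f -` U \<inter> space M \<in> sets M" .
  qed
qed

definition shf :: "real \<Rightarrow> real \<times> 'l \<Rightarrow> real \<times> 'l" where
  "shf a p = (fst p + a, snd p)"

lemma shf_cont: "continuous_on UNIV (shf a :: real \<times> 'l::topological_space \<Rightarrow> _)"
  unfolding shf_def by (intro continuous_intros)

lemma shift_back_vimage: "shift_back A s = shf s -` A"
proof (intro set_eqI iffI)
  fix x assume "x \<in> shift_back A s"
  then obtain r l where "x = (r - s, l)" "(r, l) \<in> A" unfolding shift_back_def by blast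
  then show "x \<in> shf s -` A" unfolding shf_def by simp
next
  fix x assume "x \<in> shf s -` A"
  then have "(fst x + s, snd x) \<in> A" unfolding shf_def by simp
  moreover have "x = ((fst x + s) - s, snd x)" by simp
  ultimately show "x \<in> shift_back A s" unfolding shift_back_def by blast
qed

lemma shift_back_image: "shift_back A s = shf (- s) ` A"
proof (intro set_eqI iffI)
  fix x assume "x \<in> shift_back A s"
  then obtain r l where "x = (r - s, l)" "(r, l) \<in> A" unfolding shift_back_def by blast
  then show "x \<in> shf (- s) ` A" unfolding shf_def by (intro image_eqI[of _ _ "(r, l)"]) simp_all
next
  fix x assume "x \<in> shf (- s) ` A"
  then obtain p where "p \<in> A" "x = shf (- s) p" by (rule imageE)
  then show "x \<in> shift_back A s" unfolding shift_back_def shf_def by (cases p) auto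
qed

lemma oplus_vimage: "oplus s Z1 Z2 = Z1 \<union> shf (- s) -` Z2"
proof -
  have "{(s + r, l) | r l. (r, l) \<in> Z2} = shf (- s) -` Z2"
  proof (intro set_eqI iffI)
    fix x assume "x \<in> {(s + r, l) | r l. (r, l) \<in> Z2}"
    then obtain r l where "x = (s + r, l)" "(r, l) \<in> Z2" by blast
    then show "x \<in> shf (- s) -` Z2" unfolding shf_def by simp
  next
    fix x assume "x \<in> shf (- s) -` Z2"
    then have "(fst x - s, snd x) \<in> Z2" unfolding shf_def by simp
    moreover have "x = (s + (fst x - s), snd x)" by simp
    ultimately show "x \<in> {(s + r, l) | r l. (r, l) \<in> Z2}" by blast
  qed
  then show ?thesis unfolding oplus_def by simp
qed

lemma mem_strip: "(r, l) \<in> strip t \<longleftrightarrow> 0 \<le> r \<and> r \<le> t"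
  unfolding strip_def by simp

lemma oplus_closed:
  assumes "0 \<le> a" "0 \<le> b" "Z1 \<in> closed_subsets a" "Z2 \<in> closed_subsets b"
  shows "oplus a Z1 Z2 \<in> closed_subsets (a + b)"
proof -
  have c: "closed Z1" "Z1 \<subseteq> strip a" "closed Z2" "Z2 \<subseteq> strip b"
    using assms(3,4) unfolding closed_subsets_eq by auto
  have "closed (shf (- a) -` Z2)" using c(3) shf_cont by (rule closed_vimage)
  moreover have "Z1 \<subseteq> strip (a + b)" using c(2) assms(2) unfolding strip_def by auto
  moreover have "shf (- a) -` Z2 \<subseteq> strip (a + b)"
  proof
    fix x assume "x \<in> shf (- a) -` Z2"
    then have "(fst x - a, snd x) \<in> strip b" using c(4) unfolding shf_def by auto
    then show "x \<in> strip (a + b)" using assms(1) unfolding strip_def by (cases x) auto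
  qed
  ultimately show ?thesis unfolding closed_subsets_eq oplus_vimage using c(1) by auto
qed

lemma restr_closed:
  assumes "0 \<le> s" "s \<le> t" "Z \<in> closed_subsets u"
  shows "restr s t Z \<in> closed_subsets (t - s)"
proof -
  have c: "closed Z" using assms(3) unfolding closed_subsets_eq by auto
  have "closed (Z \<inter> ({s..t} \<times> UNIV))" using c by (intro closed_Int closed_Times) auto
  then have "closed (shf s -` (Z \<inter> ({s..t} \<times> UNIV)))" using shf_cont by (rule closed_vimage)
  moreover have "shf s -` (Z \<inter> ({s..t} \<times> UNIV)) \<subseteq> strip (t - s)"
    unfolding shf_def strip_def by auto
  ultimately show ?thesis unfolding closed_subsets_eq restr_def shift_back_vimage by auto
qed

lemma vimage_disj: "f -` Z \<inter> K = {} \<longleftrightarrow> Z \<inter> f ` K = {}"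
  by blast

lemma oplus_meas:
  assumes lc: "locally_compact_space (euclidean :: 'l::{t2_space,second_countable_topology} topology)"
    and ab: "0 \<le> a" "0 \<le> b"
  shows "(\<lambda>(Z1, Z2). oplus a Z1 Z2) \<in> measurable (Cspace a \<Otimes>\<^sub>M Cspace b) (Cspace (a + b) :: (real \<times> 'l) set measure)"
proof (rule measurable_Fell[OF lc])
  show "(\<lambda>(Z1, Z2). oplus a Z1 Z2) \<in> space (Cspace a \<Otimes>\<^sub>M Cspace b) \<rightarrow> (closed_subsets (a + b) :: (real \<times> 'l) set set)"
    using oplus_closed[OF ab] by (auto simp: space_pair_measure space_Cspace)
  fix K :: "(real \<times> 'l) set" assume K: "compact K" "K \<subseteq> strip (a + b)"
  let ?K1 = "K \<inter> strip a"
  let ?K2 = "shf (- a) ` K \<inter> strip b"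
  have c1: "compact ?K1" using K(1) strip_closed by (rule compact_Int_closed)
  have "compact (shf (- a) ` K)"
    by (rule compact_continuous_image[OF continuous_on_subset[OF shf_cont] K(1)]) simp
  then have c2: "compact ?K2" using strip_closed by (rule compact_Int_closed)
  have key: "(oplus a Z1 Z2 \<inter> K = {}) \<longleftrightarrow> (Z1 \<inter> ?K1 = {} \<and> Z2 \<inter> ?K2 = {})"
    if "Z1 \<in> closed_subsets a" "Z2 \<in> closed_subsets b" for Z1 Z2 :: "(real \<times> 'l) set"
  proof -
    have s: "Z1 \<subseteq> strip a" "Z2 \<subseteq> strip b" using that unfolding closed_subsets_eq by auto
    have "oplus a Z1 Z2 \<inter> K = (Z1 \<inter> K) \<union> (shf (- a) -` Z2 \<inter> K)" unfolding oplus_vimage by blast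
    moreover have "Z1 \<inter> K = Z1 \<inter> ?K1" using s(1) by blast
    moreover have "Z2 \<inter> shf (- a) ` K = Z2 \<inter> ?K2" using s(2) by blast
    ultimately show ?thesis using vimage_disj[of "shf (- a)" Z2 K] by auto
  qed
  have eq: "{x \<in> space (Cspace a \<Otimes>\<^sub>M Cspace b). (case x of (Z1, Z2) \<Rightarrow> oplus a Z1 Z2) \<inter> K = {}}
      = miss a ?K1 \<times> miss b ?K2"
  proof (intro set_eqI)
    fix x :: "(real \<times> 'l) set \<times> (real \<times> 'l) set"
    obtain Z1 Z2 where x: "x = (Z1, Z2)" by (cases x)
    show "x \<in> {x \<in> space (Cspace a \<Otimes>\<^sub>M Cspace b). (case x of (Z1, Z2) \<Rightarrow> oplus a Z1 Z2) \<inter> K = {}}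
      \<longleftrightarrow> x \<in> miss a ?K1 \<times> miss b ?K2"
      unfolding x using key[of Z1 Z2] by (auto simp: space_pair_measure space_Cspace miss_def)
  qed
  have "miss a ?K1 \<in> sets (Cspace a)" using c1 by (intro miss_sets) auto
  moreover have "miss b ?K2 \<in> sets (Cspace b)" using c2 by (intro miss_sets) auto
  ultimately show "{x \<in> space (Cspace a \<Otimes>\<^sub>M Cspace b). (case x of (Z1, Z2) \<Rightarrow> oplus a Z1 Z2) \<inter> K = {}}
      \<in> sets (Cspace a \<Otimes>\<^sub>M Cspace b)" unfolding eq by (rule pair_measureI)
qed

lemma restr_meas:
  assumes lc: "locally_compact_space (euclidean :: 'l::{t2_space,second_countable_topology} topology)"
    and st: "0 \<le> s" "s \<le> t"
  shows "restr s t \<in> measurable (Cspace u) (Cspace (t - s) :: (real \<times> 'l) set measure)"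
proof (rule measurable_Fell[OF lc])
  show "restr s t \<in> space (Cspace u) \<rightarrow> (closed_subsets (t - s) :: (real \<times> 'l) set set)"
    using restr_closed[OF st] by (auto simp: space_Cspace)
  fix K :: "(real \<times> 'l) set" assume K: "compact K" "K \<subseteq> strip (t - s)"
  let ?K' = "(({s..t} \<times> UNIV) \<inter> shf s ` K) \<inter> strip u"
  have "compact (shf s ` K)"
    by (rule compact_continuous_image[OF continuous_on_subset[OF shf_cont] K(1)]) simp
  then have "compact (({s..t} \<times> UNIV) \<inter> shf s ` K)" by (intro closed_Int_compact closed_Times) auto
  then have c: "compact ?K'" using strip_closed by (rule compact_Int_closed)
  have key: "restr s t Z \<inter> K = {} \<longleftrightarrow> Z \<inter> ?K' = {}" if "Z \<in> closed_subsets u" for Z :: "(real \<times> 'l) set"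
  proof -
    have sZ: "Z \<subseteq> strip u" using that unfolding closed_subsets_eq by auto
    have "restr s t Z \<inter> K = {} \<longleftrightarrow> (Z \<inter> ({s..t} \<times> UNIV)) \<inter> shf s ` K = {}"
      unfolding restr_def shift_back_vimage by (rule vimage_disj)
    also have "\<dots> \<longleftrightarrow> Z \<inter> ?K' = {}" using sZ by blast
    finally show ?thesis .
  qed
  have eq: "{x \<in> space (Cspace u). restr s t x \<inter> K = {}} = miss u ?K'"
    using key by (auto simp: space_Cspace miss_def)
  show "{x \<in> space (Cspace u). restr s t x \<inter> K = {}} \<in> sets (Cspace u)"
    unfolding eq using c by (intro miss_sets) auto
qed

lemma N_sets:
  assumes lc: "locally_compact_space (euclidean :: 'l::{t2_space,second_countable_topology} topology)"
  shows "{Z \<in> closed_subsets t. Z \<inter> ({r} \<times> (UNIV :: 'l set)) \<noteq> {}} \<in> sets (Cspace t)"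
  by (rule hit_sets[OF lc]) (intro closed_Times, auto)

lemma restr_eq: "restr s t X = shf s -` (X \<inter> ({s..t} \<times> UNIV))"
  unfolding restr_def shift_back_vimage ..

lemma restr_oplus_left:
  assumes "Z1 \<subseteq> strip a" "Z1 \<inter> ({a} \<times> UNIV) = {}"
  shows "restr a (a + e) (oplus a Z1 Z2) = restr 0 e Z2"
proof (intro set_eqI)
  fix p :: "real \<times> 'a"
  obtain r l where p: "p = (r, l)" by (cases p)
  have "(r + a, l) \<in> Z1 \<Longrightarrow> 0 \<le> r \<Longrightarrow> False"
  proof -
    assume h: "(r + a, l) \<in> Z1" "0 \<le> r"
    then have "r + a \<le> a" using assms(1) unfolding strip_def by auto
    then have "r + a = a" using h(2) by simp
    then show False using h(1) assms(2) by auto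
  qed
  then show "p \<in> restr a (a + e) (oplus a Z1 Z2) \<longleftrightarrow> p \<in> restr 0 e Z2"
    unfolding restr_eq oplus_vimage p shf_def by auto
qed

lemma restr_oplus_right:
  assumes "W1 \<subseteq> strip d" "W2 \<subseteq> strip b" "W2 \<inter> ({0} \<times> UNIV) = {}"
  shows "restr 0 d (oplus d W1 W2) = W1"
proof (intro set_eqI)
  fix p :: "real \<times> 'a"
  obtain r l where p: "p = (r, l)" by (cases p)
  have "(r - d, l) \<in> W2 \<Longrightarrow> r \<le> d \<Longrightarrow> False"
  proof -
    assume h: "(r - d, l) \<in> W2" "r \<le> d"
    then have "0 \<le> r - d" using assms(2) unfolding strip_def by auto
    then have "r - d = 0" using h(2) by simp
    then show False using h(1) assms(3) by auto
  qed
  moreover have "(r, l) \<in> W1 \<Longrightarrow> 0 \<le> r \<and> r \<le> d" using assms(1) unfolding strip_def by auto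
  ultimately show "p \<in> restr 0 d (oplus d W1 W2) \<longleftrightarrow> p \<in> W1"
    unfolding restr_eq oplus_vimage p shf_def by auto
qed

lemma restr_id:
  assumes "W \<subseteq> strip d"
  shows "restr 0 d W = W"
  using assms unfolding restr_eq shf_def strip_def by auto

lemma FF:
  assumes "factorizing_family \<mu>"
  shows "t > 0 \<Longrightarrow> prob_space (\<mu> t)"
    and "t > 0 \<Longrightarrow> sets (\<mu> t) = sets (Cspace t)"
    and "t > 0 \<Longrightarrow> space (\<mu> t) = closed_subsets t"
    and "s > 0 \<Longrightarrow> t > 0 \<Longrightarrow> mutually_ac (\<mu> (s + t))
        (distr (\<mu> s \<Otimes>\<^sub>M \<mu> t) (Cspace (s + t)) (\<lambda>(Z1, Z2). oplus s Z1 Z2))"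
    and "t > 0 \<Longrightarrow> r \<in> {0..t} \<Longrightarrow> emeasure (\<mu> t) {Z \<in> closed_subsets t. Z \<inter> ({r} \<times> UNIV) \<noteq> {}} = 0"
proof -
  have A: "\<forall>t>0. prob_space (\<mu> t) \<and> sets (\<mu> t) = sets (Cspace t)"
    and B: "\<forall>s>0. \<forall>t>0. mutually_ac (\<mu> (s + t))
        (distr (\<mu> s \<Otimes>\<^sub>M \<mu> t) (Cspace (s + t)) (\<lambda>(Z1, Z2). oplus s Z1 Z2))"
    and C: "\<forall>t>0. \<forall>r\<in>{0..t}. emeasure (\<mu> t) {Z \<in> space (\<mu> t). Z \<inter> ({r} \<times> UNIV) \<noteq> {}} = 0"
    using assms unfolding factorizing_family_def by simp_all
  show p: "t > 0 \<Longrightarrow> sets (\<mu> t) = sets (Cspace t)" for t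
    using A by simp
  show sp: "t > 0 \<Longrightarrow> space (\<mu> t) = closed_subsets t" for t
  proof -
    assume "t > 0"
    then have "space (\<mu> t) = space (Cspace t)" using p by (intro sets_eq_imp_space_eq) simp
    then show ?thesis by (simp add: space_Cspace)
  qed
  show "t > 0 \<Longrightarrow> prob_space (\<mu> t)" using A by simp
  show "s > 0 \<Longrightarrow> t > 0 \<Longrightarrow> mutually_ac (\<mu> (s + t))
        (distr (\<mu> s \<Otimes>\<^sub>M \<mu> t) (Cspace (s + t)) (\<lambda>(Z1, Z2). oplus s Z1 Z2))"
    using B by simp
  show "t > 0 \<Longrightarrow> r \<in> {0..t} \<Longrightarrow> emeasure (\<mu> t) {Z \<in> closed_subsets t. Z \<inter> ({r} \<times> UNIV) \<noteq> {}} = 0"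
  proof -
    assume "t > 0" "r \<in> {0..t}"
    then have "emeasure (\<mu> t) {Z \<in> space (\<mu> t). Z \<inter> ({r} \<times> UNIV) \<noteq> {}} = 0" using C by blast
    then show ?thesis using sp[OF \<open>t > 0\<close>] by simp
  qed
qed

lemma decomp:
  fixes \<mu> :: "real \<Rightarrow> (real \<times> 'l::{t2_space,second_countable_topology}) set measure"
  assumes lc: "locally_compact_space (euclidean :: 'l topology)"
    and ff: "factorizing_family \<mu>"
    and ab: "0 < a" "0 < b"
    and S: "S \<in> sets (Cspace (a + b))" and X1: "X1 \<in> sets (Cspace a)" and X2: "X2 \<in> sets (Cspace b)"
    and hyp: "\<And>Z1 Z2. Z1 \<in> closed_subsets a \<Longrightarrow> Z2 \<in> closed_subsets b \<Longrightarrow>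
        Z1 \<inter> ({a} \<times> UNIV) = {} \<Longrightarrow> Z2 \<inter> ({0} \<times> UNIV) = {} \<Longrightarrow>
        (oplus a Z1 Z2 \<in> S \<longleftrightarrow> Z1 \<in> X1 \<and> Z2 \<in> X2)"
  shows "emeasure (\<mu> (a + b)) S = 0 \<longleftrightarrow> emeasure (\<mu> a) X1 * emeasure (\<mu> b) X2 = 0"
proof -
  interpret pa: prob_space "\<mu> a" using FF(1)[OF ff ab(1)] .
  interpret pb: prob_space "\<mu> b" using FF(1)[OF ff ab(2)] .
  let ?P = "\<mu> a \<Otimes>\<^sub>M \<mu> b"
  let ?g = "(\<lambda>(Z1, Z2). oplus a Z1 Z2) :: (real \<times> 'l) set \<times> (real \<times> 'l) set \<Rightarrow> (real \<times> 'l) set"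
  let ?D = "distr ?P (Cspace (a + b)) ?g"
  have sa: "sets (\<mu> a) = sets (Cspace a)" by (rule FF(2)[OF ff ab(1)])
  have sb: "sets (\<mu> b) = sets (Cspace b)" by (rule FF(2)[OF ff ab(2)])
  have spa: "space (\<mu> a) = closed_subsets a" by (rule FF(3)[OF ff ab(1)])
  have spb: "space (\<mu> b) = closed_subsets b" by (rule FF(3)[OF ff ab(2)])
  have setsP: "sets ?P = sets (Cspace a \<Otimes>\<^sub>M Cspace b)"
    using sa sb by (rule sets_pair_measure_cong)
  have spP: "space ?P = closed_subsets a \<times> closed_subsets b"
    using spa spb by (simp add: space_pair_measure)
  have gm0: "?g \<in> measurable (Cspace a \<Otimes>\<^sub>M Cspace b) (Cspace (a + b))"
    using oplus_meas[OF lc, of a b] ab by simp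
  have gm: "?g \<in> measurable ?P (Cspace (a + b))"
    unfolding measurable_cong_sets[OF setsP refl] by (rule gm0)
  have eD: "emeasure ?D S = emeasure ?P (?g -` S \<inter> space ?P)" by (rule emeasure_distr[OF gm S])
  have mac: "mutually_ac (\<mu> (a + b)) ?D" by (rule FF(4)[OF ff ab])
  have e1: "emeasure (\<mu> (a + b)) S = 0 \<longleftrightarrow> emeasure ?D S = 0"
  proof -
    have "sets (\<mu> (a + b)) = sets (Cspace (a + b))" using ab by (intro FF(2)[OF ff]) simp
    then have sS: "S \<in> sets (\<mu> (a + b))" using S by simp
    have sD: "S \<in> sets ?D" using S by simp
    show ?thesis using mac sS sD unfolding mutually_ac_def absolutely_continuous_def null_sets_def by blast
  qed
  define Na where "Na = {Z \<in> closed_subsets a. Z \<inter> ({a} \<times> (UNIV :: 'l set)) \<noteq> {}}"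
  define N0 where "N0 = {Z \<in> closed_subsets b. Z \<inter> ({0} \<times> (UNIV :: 'l set)) \<noteq> {}}"
  have Na: "Na \<in> sets (\<mu> a)" unfolding Na_def sa by (rule N_sets[OF lc])
  have Na0: "emeasure (\<mu> a) Na = 0" unfolding Na_def using ab by (intro FF(5)[OF ff]) auto
  have N0: "N0 \<in> sets (\<mu> b)" unfolding N0_def sb by (rule N_sets[OF lc])
  have N00: "emeasure (\<mu> b) N0 = 0" unfolding N0_def using ab by (intro FF(5)[OF ff]) auto
  have n1: "Na \<times> closed_subsets b \<in> null_sets ?P"
  proof (rule null_setsI)
    have "emeasure ?P (Na \<times> space (\<mu> b)) = emeasure (\<mu> a) Na * emeasure (\<mu> b) (space (\<mu> b))"
      using Na by (intro pb.emeasure_pair_measure_Times) auto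
    then show "emeasure ?P (Na \<times> closed_subsets b) = 0" using Na0 spb by simp
    show "Na \<times> closed_subsets b \<in> sets ?P" using Na spb by (metis pair_measureI sets.top)
  qed
  have n2: "closed_subsets a \<times> N0 \<in> null_sets ?P"
  proof (rule null_setsI)
    have "emeasure ?P (space (\<mu> a) \<times> N0) = emeasure (\<mu> a) (space (\<mu> a)) * emeasure (\<mu> b) N0"
      using N0 by (intro pb.emeasure_pair_measure_Times) auto
    then show "emeasure ?P (closed_subsets a \<times> N0) = 0" using N00 spa by simp
    show "closed_subsets a \<times> N0 \<in> sets ?P" using N0 spa by (metis pair_measureI sets.top)
  qed
  let ?N = "Na \<times> closed_subsets b \<union> closed_subsets a \<times> N0"
  have nN: "?N \<in> null_sets ?P" using n1 n2 by (rule null_sets.Un)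
  have G: "?g -` S \<inter> space ?P \<in> sets ?P" using gm S by (rule measurable_sets)
  have X1a: "X1 \<subseteq> closed_subsets a" using sets.sets_into_space[OF X1] by (simp add: space_Cspace)
  have X2b: "X2 \<subseteq> closed_subsets b" using sets.sets_into_space[OF X2] by (simp add: space_Cspace)
  have X: "X1 \<times> X2 \<in> sets ?P" using X1 X2 sa sb by simp
  have eq: "(?g -` S \<inter> space ?P) - ?N = (X1 \<times> X2) - ?N"
  proof (intro set_eqI)
    fix x :: "(real \<times> 'l) set \<times> (real \<times> 'l) set"
    obtain Z1 Z2 where x: "x = (Z1, Z2)" by (cases x)
    show "x \<in> (?g -` S \<inter> space ?P) - ?N \<longleftrightarrow> x \<in> (X1 \<times> X2) - ?N"
    proof (cases "Z1 \<in> closed_subsets a \<and> Z2 \<in> closed_subsets b")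
      case True
      then show ?thesis
      proof (cases "Z1 \<inter> ({a} \<times> UNIV) = {} \<and> Z2 \<inter> ({0} \<times> UNIV) = {}")
        case True2: True
        then have "x \<notin> ?N" unfolding x Na_def N0_def by auto
        moreover have "oplus a Z1 Z2 \<in> S \<longleftrightarrow> Z1 \<in> X1 \<and> Z2 \<in> X2" using hyp True True2 by blast
        ultimately show ?thesis unfolding x spP using True by auto
      next
        case False
        then have "x \<in> ?N" unfolding x Na_def N0_def using True by auto
        then show ?thesis by simp
      qed
    next
      case False
      then have "x \<notin> X1 \<times> X2" unfolding x using X1a X2b by auto
      moreover have "x \<notin> space ?P" unfolding x spP using False by auto
      ultimately show ?thesis by simp
    qed
  qed
  have "emeasure ?P (?g -` S \<inter> space ?P) = emeasure ?P (X1 \<times> X2)"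
    using emeasure_Diff_null_set[OF nN G] emeasure_Diff_null_set[OF nN X] eq by simp
  also have "\<dots> = emeasure (\<mu> a) X1 * emeasure (\<mu> b) X2"
    using X1 X2 sa sb by (intro pb.emeasure_pair_measure_Times) auto
  finally show ?thesis using e1 eD by simp
qed

lemma left_step:
  fixes \<mu> :: "real \<Rightarrow> (real \<times> 'l::{t2_space,second_countable_topology}) set measure"
  assumes lc: "locally_compact_space (euclidean :: 'l topology)"
    and ff: "factorizing_family \<mu>"
    and ab: "0 < a" "0 < b" and e: "0 < e" "e \<le> b"
    and A: "A \<in> sets (Cspace e)"
  shows "emeasure (\<mu> (a + b)) (restr a (a + e) -` A \<inter> closed_subsets (a + b)) = 0
     \<longleftrightarrow> emeasure (\<mu> b) (restr 0 e -` A \<inter> closed_subsets b) = 0"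
proof -
  interpret pa: prob_space "\<mu> a" using FF(1)[OF ff ab(1)] .
  have m1: "restr a (a + e) \<in> measurable (Cspace (a + b)) (Cspace e :: (real \<times> 'l) set measure)"
    using restr_meas[OF lc, of a "a + e" "a + b"] ab e by simp
  have m2: "restr 0 e \<in> measurable (Cspace b) (Cspace e :: (real \<times> 'l) set measure)"
    using restr_meas[OF lc, of 0 e b] e by simp
  have S: "restr a (a + e) -` A \<inter> closed_subsets (a + b) \<in> sets (Cspace (a + b))"
    using measurable_sets[OF m1 A] by (simp add: space_Cspace)
  have X2: "restr 0 e -` A \<inter> closed_subsets b \<in> sets (Cspace b)"
    using measurable_sets[OF m2 A] by (simp add: space_Cspace)
  have X1: "closed_subsets a \<in> sets (Cspace a)" using sets.top[of "Cspace a"] by (simp add: space_Cspace)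
  have dec: "emeasure (\<mu> (a + b)) (restr a (a + e) -` A \<inter> closed_subsets (a + b)) = 0
     \<longleftrightarrow> emeasure (\<mu> a) (closed_subsets a) * emeasure (\<mu> b) (restr 0 e -` A \<inter> closed_subsets b) = 0"
  proof (rule decomp[OF lc ff ab S X1 X2])
    fix Z1 Z2 :: "(real \<times> 'l) set"
    assume Z: "Z1 \<in> closed_subsets a" "Z2 \<in> closed_subsets b" "Z1 \<inter> ({a} \<times> UNIV) = {}"
    have "oplus a Z1 Z2 \<in> closed_subsets (a + b)" using Z(1,2) ab by (intro oplus_closed) auto
    moreover have "restr a (a + e) (oplus a Z1 Z2) = restr 0 e Z2"
      using Z(1,3) unfolding closed_subsets_eq by (intro restr_oplus_left) auto
    ultimately show "oplus a Z1 Z2 \<in> restr a (a + e) -` A \<inter> closed_subsets (a + b)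
        \<longleftrightarrow> Z1 \<in> closed_subsets a \<and> Z2 \<in> restr 0 e -` A \<inter> closed_subsets b"
      using Z(1,2) by simp
  qed
  have "emeasure (\<mu> a) (closed_subsets a) = 1"
    using pa.emeasure_space_1 FF(3)[OF ff ab(1)] by simp
  then show ?thesis using dec by simp
qed

lemma right_step:
  fixes \<mu> :: "real \<Rightarrow> (real \<times> 'l::{t2_space,second_countable_topology}) set measure"
  assumes lc: "locally_compact_space (euclidean :: 'l topology)"
    and ff: "factorizing_family \<mu>"
    and db: "0 < d" "0 < b"
    and A: "A \<in> sets (Cspace d)"
  shows "emeasure (\<mu> (d + b)) (restr 0 d -` A \<inter> closed_subsets (d + b)) = 0
     \<longleftrightarrow> emeasure (\<mu> d) A = 0"
proof -
  interpret pb: prob_space "\<mu> b" using FF(1)[OF ff db(2)] .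
  have m1: "restr 0 d \<in> measurable (Cspace (d + b)) (Cspace d :: (real \<times> 'l) set measure)"
    using restr_meas[OF lc, of 0 d "d + b"] db by simp
  have S: "restr 0 d -` A \<inter> closed_subsets (d + b) \<in> sets (Cspace (d + b))"
    using measurable_sets[OF m1 A] by (simp add: space_Cspace)
  have X2: "closed_subsets b \<in> sets (Cspace b)" using sets.top[of "Cspace b"] by (simp add: space_Cspace)
  have Ad: "A \<subseteq> closed_subsets d" using sets.sets_into_space[OF A] by (simp add: space_Cspace)
  have dec: "emeasure (\<mu> (d + b)) (restr 0 d -` A \<inter> closed_subsets (d + b)) = 0
     \<longleftrightarrow> emeasure (\<mu> d) A * emeasure (\<mu> b) (closed_subsets b) = 0"
  proof (rule decomp[OF lc ff db S A X2])
    fix W1 W2 :: "(real \<times> 'l) set"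
    assume W: "W1 \<in> closed_subsets d" "W2 \<in> closed_subsets b" "W2 \<inter> ({0} \<times> UNIV) = {}"
    have "oplus d W1 W2 \<in> closed_subsets (d + b)" using W(1,2) db by (intro oplus_closed) auto
    moreover have "restr 0 d (oplus d W1 W2) = W1"
      using W unfolding closed_subsets_eq by (intro restr_oplus_right) auto
    ultimately show "oplus d W1 W2 \<in> restr 0 d -` A \<inter> closed_subsets (d + b)
        \<longleftrightarrow> W1 \<in> A \<and> W2 \<in> closed_subsets b"
      using W(2) by simp
  qed
  have "emeasure (\<mu> b) (closed_subsets b) = 1"
    using pb.emeasure_space_1 FF(3)[OF ff db(2)] by simp
  then show ?thesis using dec by simp
qed

theorem lemma2p6:
  fixes \<mu> :: "real \<Rightarrow> (real \<times> 'l::{t2_space, second_countable_topology}) set measure"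
  assumes "locally_compact_space (euclidean :: 'l topology)"
    and "factorizing_family \<mu>"
    and "0 \<le> s" and "s < t" and "t \<le> 1"
  shows "mutually_ac (distr (\<mu> 1) (Cspace (t - s)) (restr s t)) (\<mu> (t - s))"
proof -
  note lc = assms(1) and ff = assms(2)
  have d: "0 < t - s" using assms by simp
  have s1: "sets (\<mu> 1) = sets (Cspace 1)" by (rule FF(2)[OF ff]) simp
  have sp1: "space (\<mu> 1) = closed_subsets 1" by (rule FF(3)[OF ff]) simp
  have sd: "sets (\<mu> (t - s)) = sets (Cspace (t - s))" by (rule FF(2)[OF ff d])
  have Rm0: "restr s t \<in> measurable (Cspace 1) (Cspace (t - s) :: (real \<times> 'l) set measure)"
    using restr_meas[OF lc, of s t 1] assms by simp
  have Rm: "restr s t \<in> measurable (\<mu> 1) (Cspace (t - s) :: (real \<times> 'l) set measure)"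
    unfolding measurable_cong_sets[OF s1 refl] by (rule Rm0)
  have claim: "emeasure (\<mu> 1) (restr s t -` A \<inter> closed_subsets 1) = 0 \<longleftrightarrow> emeasure (\<mu> (t - s)) A = 0"
    if A: "A \<in> sets (Cspace (t - s))" for A
  proof -
    have step1: "emeasure (\<mu> 1) (restr s t -` A \<inter> closed_subsets 1) = 0
        \<longleftrightarrow> emeasure (\<mu> (1 - s)) (restr 0 (t - s) -` A \<inter> closed_subsets (1 - s)) = 0"
    proof (cases "s = 0")
      case True
      then show ?thesis by simp
    next
      case False
      then have "0 < s" using assms by simp
      from left_step[OF lc ff this _ d _ A, of "1 - s"] assms
      show ?thesis by simp
    qed
    have step2: "emeasure (\<mu> (1 - s)) (restr 0 (t - s) -` A \<inter> closed_subsets (1 - s)) = 0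
        \<longleftrightarrow> emeasure (\<mu> (t - s)) A = 0"
    proof (cases "t = 1")
      case True
      have Ad: "A \<subseteq> closed_subsets (t - s)" using sets.sets_into_space[OF A] by (simp add: space_Cspace)
      have "restr 0 (t - s) -` A \<inter> closed_subsets (t - s) = A"
      proof (intro set_eqI iffI)
        fix Z assume "Z \<in> restr 0 (t - s) -` A \<inter> closed_subsets (t - s)"
        then show "Z \<in> A" using restr_id[of Z "t - s"] unfolding closed_subsets_eq by auto
      next
        fix Z assume "Z \<in> A"
        then show "Z \<in> restr 0 (t - s) -` A \<inter> closed_subsets (t - s)"
          using Ad restr_id[of Z "t - s"] unfolding closed_subsets_eq by auto
      qed
      then show ?thesis using True by simp
    next
      case False
      then have "0 < 1 - t" using assms by simp
      from right_step[OF lc ff d this A] show ?thesis by simp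
    qed
    show ?thesis using step1 step2 by simp
  qed
  have sD: "sets (distr (\<mu> 1) (Cspace (t - s)) (restr s t)) = sets (Cspace (t - s))" by simp
  have eD: "emeasure (distr (\<mu> 1) (Cspace (t - s)) (restr s t)) A = emeasure (\<mu> 1) (restr s t -` A \<inter> closed_subsets 1)"
    if "A \<in> sets (Cspace (t - s))" for A
    using emeasure_distr[OF Rm that] sp1 by simp
  show ?thesis
    unfolding mutually_ac_def absolutely_continuous_def
  proof (intro conjI subsetI)
    fix A assume "A \<in> null_sets (distr (\<mu> 1) (Cspace (t - s)) (restr s t))"
    then have A: "A \<in> sets (Cspace (t - s))" "emeasure (distr (\<mu> 1) (Cspace (t - s)) (restr s t)) A = 0"
      unfolding null_sets_def by auto
    then show "A \<in> null_sets (\<mu> (t - s))" using claim[OF A(1)] eD[OF A(1)] sd unfolding null_sets_def by simp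
  next
    fix A assume "A \<in> null_sets (\<mu> (t - s))"
    then have A: "A \<in> sets (Cspace (t - s))" "emeasure (\<mu> (t - s)) A = 0"
      using sd unfolding null_sets_def by auto
    then show "A \<in> null_sets (distr (\<mu> 1) (Cspace (t - s)) (restr s t))"
      using claim[OF A(1)] eD[OF A(1)] unfolding null_sets_def by simp
  qed
qed

end
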